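(* Let $\mathcal{T}=(V,A,E,f,q,v_0)$ be a decorated rooted tree such that $f(\alpha)\in\{0,1\}$ for all $\alpha\in A$. Then for every out-pair $(x,e)$ of $\mathcal{T}$, $$p(x,e)=1+\sum_{y\in Y(x,e)}\phi(x,y)(\delta_y-2).$$
   Context: A graph is a pair $(X_0,X_1)$ of finite sets such that each element of $X_1$ (an edge) is a $2$-element subset of $X_0$; elements of $X_0$ are cells. The valency $\delta_x$ of a cell is the number of edges containing it. A path is a tuple $(x_0,\dots,x_n)$ ($n\ge0$) of cells with $\{x_i,x_{i+1}\}$ an edge for each $i<n$, these edges pairwise distinct; a cell/edge is in the path if it is some $x_i$ / some $\{x_i,x_{i+1}\}$. The graph is a tree if any two cells $x,y$ are joined by a unique path $\gamma_{x,y}$. A decorated tree is $(V,A,E,f,q)$ with $V$ (vertices), $A$ (arrows) finite disjoint sets, $(V\cup A,E)$ a tree, every arrow of valency $1$, $f:A\to\mathbb{Z}$, $q(e,x)\in\mathbb{Z}$ for each $e\in E$, $x\in e$, with $q(e,\alpha)=1$ for $\alpha\in A$, and for each $v\in V$ and distinct edges $e,e'\ni v$, $\gcd(q(e,v),q(e',v))=1$. $A_0=\{\alpha\in A:f(\alpha)=0\}$. An edge $\varepsilon$ is incident to a path $\gamma$ if it is not in $\gamma$ but contains a cell $u$ of $\gamma$; $q(\varepsilon,\gamma):=q(\varepsilon,u)$. For $v\ne\alpha$, $v\in V\cup A$, $\alpha\in A$: $\hat x_{v,\alpha}=f(\alpha)\prod_\varepsilon q(\varepsilon,\gamma_{v,\alpha})$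 over edges $\varepsilon$ incident to $\gamma_{v,\alpha}$ and not containing $v$ (empty product $=1$). For $u\in V\cup A$, $e\ni u$: $p(u,e)=\sum\hat x_{u,\alpha}$ over $\alpha\in A\setminus A_0$ with $e$ in $\gamma_{u,\alpha}$. For a path $\gamma=(x_0,\dots,x_n)$, $n\ge1$, $\phi(\gamma)$ is the product of $q(e,u)$ over all pairs with $u\in\{x_1,\dots,x_n\}$ and $e$ an edge containing $u$ not in $\gamma$; for $x\ne y$, $\phi(x,y)=\phi(\gamma_{x,y})$. For $x\in V\cup A$ and an edge $e\ni x$, $Y(x,e)=\{y\in V\cup A_0: e \text{ is in } \gamma_{x,y}\}$. A root of $(V,A,E,f,q)$ is a vertex $v_0$ with $q(e,v_0)=1$ for every edge $e\ni v_0$ such that for every $v\in V\setminus\{v_0\}$, all edges $e\ni v$ not in $\gamma_{v_0,v}$ satisfy $q(e,v)\ge1$ and at most one of them satisfies $q(e,v)\ne1$. A decorated rooted tree is $(V,A,E,f,q,v_0)$ with $v_0$ a root. For distinct $x,y$, $x<y$ means $x$ is in $\gamma_{v_0,y}$. An out-pair is a pair $(x,e)$ with $x\in V\cup A$ and $e=\{x,x'\}$ an edge such that $x<x'$. *)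

theory Defs
  imports Main
begin

definition is_graph :: "'a set \<Rightarrow> 'a set set \<Rightarrow> bool" where
  "is_graph X0 X1 \<longleftrightarrow> finite X0 \<and> finite X1 \<and> (\<forall>e\<in>X1. e \<subseteq> X0 \<and> card e = 2)"

definition valency :: "'a set set \<Rightarrow> 'a \<Rightarrow> nat" where
  "valency X1 x = card {e \<in> X1. x \<in> e}"

definition path_edges :: "'a list \<Rightarrow> 'a set list" where
  "path_edges xs = map (\<lambda>i. {xs ! i, xs ! Suc i}) [0..<length xs - 1]"

definition is_path :: "'a set \<Rightarrow> 'a set set \<Rightarrow> 'a list \<Rightarrow> bool" where
  "is_path X0 X1 xs \<longleftrightarrow> xs \<noteq> [] \<and> set xs \<subseteq> X0 \<and>
     (\<forall>e\<in>set (path_edges xs). e \<in> X1) \<and> distinct (path_edges xs)"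

definition is_tree :: "'a set \<Rightarrow> 'a set set \<Rightarrow> bool" where
  "is_tree X0 X1 \<longleftrightarrow> is_graph X0 X1 \<and>
     (\<forall>x\<in>X0. \<forall>y\<in>X0. \<exists>!xs. is_path X0 X1 xs \<and> hd xs = x \<and> last xs = y)"

definition gpath :: "'a set \<Rightarrow> 'a set set \<Rightarrow> 'a \<Rightarrow> 'a \<Rightarrow> 'a list" where
  "gpath X0 X1 x y = (THE xs. is_path X0 X1 xs \<and> hd xs = x \<and> last xs = y)"

definition decorated_tree ::
  "'a set \<Rightarrow> 'a set \<Rightarrow> 'a set set \<Rightarrow> ('a \<Rightarrow> int) \<Rightarrow> ('a set \<Rightarrow> 'a \<Rightarrow> int) \<Rightarrow> bool" where
  "decorated_tree V A E f q \<longleftrightarrow>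
     finite V \<and> finite A \<and> V \<inter> A = {} \<and> is_tree (V \<union> A) E \<and>
     (\<forall>\<alpha>\<in>A. valency E \<alpha> = 1) \<and>
     (\<forall>e\<in>E. \<forall>\<alpha>\<in>A. \<alpha> \<in> e \<longrightarrow> q e \<alpha> = 1) \<and>
     (\<forall>v\<in>V. \<forall>e\<in>E. \<forall>e'\<in>E. v \<in> e \<and> v \<in> e' \<and> e \<noteq> e' \<longrightarrow> gcd (q e v) (q e' v) = 1)"

definition A0 :: "'a set \<Rightarrow> ('a \<Rightarrow> int) \<Rightarrow> 'a set" where
  "A0 A f = {\<alpha> \<in> A. f \<alpha> = 0}"

definition incident :: "'a set set \<Rightarrow> 'a set \<Rightarrow> 'a list \<Rightarrow> bool" where
  "incident E \<epsilon> \<gamma> \<longleftrightarrow> \<epsilon> \<in> E \<and> \<epsilon> \<notin> set (path_edges \<gamma>) \<and> (\<exists>u\<in>set \<gamma>. u \<in> \<epsilon>)"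

definition q_path :: "('a set \<Rightarrow> 'a \<Rightarrow> int) \<Rightarrow> 'a set \<Rightarrow> 'a list \<Rightarrow> int" where
  "q_path q \<epsilon> \<gamma> = q \<epsilon> (SOME u. u \<in> set \<gamma> \<and> u \<in> \<epsilon>)"

definition xhat ::
  "'a set \<Rightarrow> 'a set \<Rightarrow> 'a set set \<Rightarrow> ('a \<Rightarrow> int) \<Rightarrow> ('a set \<Rightarrow> 'a \<Rightarrow> int) \<Rightarrow> 'a \<Rightarrow> 'a \<Rightarrow> int" where
  "xhat V A E f q v \<alpha> =
     f \<alpha> * (\<Prod>\<epsilon>\<in>{\<epsilon>. incident E \<epsilon> (gpath (V \<union> A) E v \<alpha>) \<and> v \<notin> \<epsilon>}.
                q_path q \<epsilon> (gpath (V \<union> A) E v \<alpha>))"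

definition pfun ::
  "'a set \<Rightarrow> 'a set \<Rightarrow> 'a set set \<Rightarrow> ('a \<Rightarrow> int) \<Rightarrow> ('a set \<Rightarrow> 'a \<Rightarrow> int) \<Rightarrow> 'a \<Rightarrow> 'a set \<Rightarrow> int" where
  "pfun V A E f q u e =
     (\<Sum>\<alpha>\<in>{\<alpha> \<in> A - A0 A f. e \<in> set (path_edges (gpath (V \<union> A) E u \<alpha>))}. xhat V A E f q u \<alpha>)"

definition phi_path :: "'a set set \<Rightarrow> ('a set \<Rightarrow> 'a \<Rightarrow> int) \<Rightarrow> 'a list \<Rightarrow> int" where
  "phi_path E q \<gamma> =
     (\<Prod>(u, e)\<in>{(u, e). u \<in> set (tl \<gamma>) \<and> e \<in> E \<and> u \<in> e \<and> e \<notin> set (path_edges \<gamma>)}. q e u)"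

definition phi ::
  "'a set \<Rightarrow> 'a set \<Rightarrow> 'a set set \<Rightarrow> ('a set \<Rightarrow> 'a \<Rightarrow> int) \<Rightarrow> 'a \<Rightarrow> 'a \<Rightarrow> int" where
  "phi V A E q x y = phi_path E q (gpath (V \<union> A) E x y)"

definition Yset ::
  "'a set \<Rightarrow> 'a set \<Rightarrow> 'a set set \<Rightarrow> ('a \<Rightarrow> int) \<Rightarrow> 'a \<Rightarrow> 'a set \<Rightarrow> 'a set" where
  "Yset V A E f x e = {y \<in> V \<union> A0 A f. e \<in> set (path_edges (gpath (V \<union> A) E x y))}"

definition is_root ::
  "'a set \<Rightarrow> 'a set \<Rightarrow> 'a set set \<Rightarrow> ('a set \<Rightarrow> 'a \<Rightarrow> int) \<Rightarrow> 'a \<Rightarrow> bool" where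
  "is_root V A E q v0 \<longleftrightarrow> v0 \<in> V \<and> (\<forall>e\<in>E. v0 \<in> e \<longrightarrow> q e v0 = 1) \<and>
     (\<forall>v\<in>V - {v0}.
        (\<forall>e\<in>E. v \<in> e \<and> e \<notin> set (path_edges (gpath (V \<union> A) E v0 v)) \<longrightarrow> q e v \<ge> 1) \<and>
        card {e\<in>E. v \<in> e \<and> e \<notin> set (path_edges (gpath (V \<union> A) E v0 v)) \<and> q e v \<noteq> 1} \<le> 1)"

definition decorated_rooted_tree ::
  "'a set \<Rightarrow> 'a set \<Rightarrow> 'a set set \<Rightarrow> ('a \<Rightarrow> int) \<Rightarrow> ('a set \<Rightarrow> 'a \<Rightarrow> int) \<Rightarrow> 'a \<Rightarrow> bool" where
  "decorated_rooted_tree V A E f q v0 \<longleftrightarrow> decorated_tree V A E f q \<and> is_root V A E q v0"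

definition tree_less :: "'a set \<Rightarrow> 'a set \<Rightarrow> 'a set set \<Rightarrow> 'a \<Rightarrow> 'a \<Rightarrow> 'a \<Rightarrow> bool" where
  "tree_less V A E v0 x y \<longleftrightarrow> x \<noteq> y \<and> x \<in> set (gpath (V \<union> A) E v0 y)"

definition out_pair :: "'a set \<Rightarrow> 'a set \<Rightarrow> 'a set set \<Rightarrow> 'a \<Rightarrow> 'a \<Rightarrow> 'a set \<Rightarrow> bool" where
  "out_pair V A E v0 x e \<longleftrightarrow> x \<in> V \<union> A \<and> e \<in> E \<and>
     (\<exists>x'. e = {x, x'} \<and> tree_less V A E v0 x x')"

end

theory Submission
  imports Defs
begin


lemma pe_Nil[simp]: "path_edges [] = []"
  by (simp add: path_edges_def)
lemma pe_single[simp]: "path_edges [a] = []"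
  by (simp add: path_edges_def)
lemma pe_Cons2[simp]: "path_edges (a # b # xs) = {a,b} # path_edges (b # xs)"
  unfolding path_edges_def
  by (simp add: upt_conv_Cons map_Suc_upt[symmetric] del: upt_Suc)

lemma pe_Cons: "ys \<noteq> [] \<Longrightarrow> path_edges (v # ys) = {v, hd ys} # path_edges ys"
  by (cases ys) auto

lemma pe_append: "xs \<noteq> [] \<Longrightarrow> ys \<noteq> [] \<Longrightarrow>
  path_edges (xs @ ys) = path_edges xs @ {last xs, hd ys} # path_edges ys"
proof (induction xs rule: induct_list012)
  case (3 x y zs)
  then show ?case by simp
qed (auto simp: pe_Cons)

lemma pe_subset: "e \<in> set (path_edges xs) \<Longrightarrow> e \<subseteq> set xs"
  by (induction xs rule: induct_list012) auto

lemma pe_mono_Cons: "set (path_edges xs) \<subseteq> set (path_edges (x # xs))"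
  by (cases xs) auto

lemma pe_mono_app: "set (path_edges ys) \<subseteq> set (path_edges (xs @ ys))"
  by (induction xs) (auto intro: pe_mono_Cons[THEN subsetD])

lemma pe_mid: "{a,b} \<in> set (path_edges (P @ a # b # R))"
  using pe_mono_app[of "a # b # R" P] by auto

lemma is_path_Cons: "ys \<noteq> [] \<Longrightarrow> is_path N E (x # ys) \<longleftrightarrow>
   x \<in> N \<and> {x, hd ys} \<in> E \<and> {x, hd ys} \<notin> set (path_edges ys) \<and> is_path N E ys"
  by (auto simp: is_path_def pe_Cons)

lemma is_path_single: "is_path N E [x] \<longleftrightarrow> x \<in> N"
  by (auto simp: is_path_def)

lemma is_path_append: "is_path N E (xs @ ys) \<Longrightarrow> xs \<noteq> [] \<Longrightarrow> ys \<noteq> [] \<Longrightarrow>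
   is_path N E xs \<and> is_path N E ys"
  by (auto simp: is_path_def pe_append)

lemma is_path_mid: "is_path N E (P @ Q @ R) \<Longrightarrow> Q \<noteq> [] \<Longrightarrow> is_path N E Q"
proof -
  assume h: "is_path N E (P @ Q @ R)" "Q \<noteq> []"
  have "is_path N E (Q @ R)"
    using h by (cases "P = []") (auto dest: is_path_append)
  then show ?thesis using h by (cases "R = []") (auto dest: is_path_append)
qed

lemma is_path_snoc: "is_path N E xs \<Longrightarrow> {last xs, c} \<in> E \<Longrightarrow> c \<notin> set xs \<Longrightarrow> c \<in> N \<Longrightarrow>
   is_path N E (xs @ [c])"
  unfolding is_path_def by (auto simp: pe_append dest: pe_subset)



locale tr = fixes N :: "'a set" and E :: "'a set set"
  assumes tree: "is_tree N E"
begin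

lemma finN: "finite N" and finE: "finite E" and edge: "e \<in> E \<Longrightarrow> e \<subseteq> N \<and> card e = 2"
  using tree by (auto simp: is_tree_def is_graph_def)

lemma edge2: "{a,b} \<in> E \<Longrightarrow> a \<noteq> b \<and> a \<in> N \<and> b \<in> N"
  using edge[of "{a,b}"] by (cases "a = b") auto

lemma edge_other: "e \<in> E \<Longrightarrow> v \<in> e \<Longrightarrow> \<exists>c. c \<noteq> v \<and> e = {v,c}"
  using edge[of e] by (auto simp: card_2_iff)

lemma path_in_N: "is_path N E xs \<Longrightarrow> set xs \<subseteq> N"
  by (simp add: is_path_def)

lemma path_eq: "is_path N E xs \<Longrightarrow> is_path N E ys \<Longrightarrow> hd xs = hd ys \<Longrightarrow> last xs = last ys \<Longrightarrow> xs = ys"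
proof -
  assume h: "is_path N E xs" "is_path N E ys" "hd xs = hd ys" "last xs = last ys"
  then have "xs \<noteq> []" "hd xs \<in> N" "last xs \<in> N" by (auto simp: is_path_def)
  then have "\<exists>!zs. is_path N E zs \<and> hd zs = hd xs \<and> last zs = last xs"
    using tree by (auto simp: is_tree_def)
  then show ?thesis using h by auto
qed

lemma gp: "x \<in> N \<Longrightarrow> y \<in> N \<Longrightarrow> is_path N E (gpath N E x y) \<and> hd (gpath N E x y) = x \<and> last (gpath N E x y) = y"
  unfolding gpath_def
  by (rule theI') (use tree in \<open>auto simp: is_tree_def\<close>)

lemma gp_ne: "x \<in> N \<Longrightarrow> y \<in> N \<Longrightarrow> gpath N E x y \<noteq> []"
  using gp by (auto simp: is_path_def)

lemma gp_unique: "is_path N E xs \<Longrightarrow> hd xs = x \<Longrightarrow> last xs = y \<Longrightarrow> gpath N E x y = xs"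
proof -
  assume h: "is_path N E xs" "hd xs = x" "last xs = y"
  then have "x \<in> N" "y \<in> N" by (auto simp: is_path_def)
  then show ?thesis using gp[of x y] h path_eq by metis
qed

lemma path_distinct: "is_path N E xs \<Longrightarrow> distinct xs"
proof (rule ccontr)
  assume h: "is_path N E xs" "\<not> distinct xs"
  then obtain P u M R where d: "xs = P @ [u] @ M @ [u] @ R"
    using not_distinct_decomp by blast
  have "is_path N E (u # M @ [u])" using is_path_mid[of N E P "u # M @ [u]" R] h d by simp
  moreover have "is_path N E [u]" using calculation by (auto simp: is_path_def)
  ultimately have "u # M @ [u] = [u]" using path_eq by fastforce
  then show False by simp
qed

lemma path2: "{a,b} \<in> E \<Longrightarrow> is_path N E [a,b]"
  using edge2[of a b] by (auto simp: is_path_def)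

lemma chord: "is_path N E xs \<Longrightarrow> {a,b} \<in> E \<Longrightarrow> a \<in> set xs \<Longrightarrow> b \<in> set xs \<Longrightarrow> {a,b} \<in> set (path_edges xs)"
proof -
  assume h: "is_path N E xs" "{a,b} \<in> E" "a \<in> set xs" "b \<in> set xs"
  have ab: "a \<noteq> b" using edge2 h(2) by blast
  have gen: "{a,b} \<in> set (path_edges xs)" if "xs = P @ a # M @ b # R" "{a,b} \<in> E" for a b P M R
  proof -
    have "is_path N E (a # M @ [b])" using is_path_mid[of N E P "a # M @ [b]" R] h(1) that by simp
    moreover have "is_path N E [a,b]" using path2 that by blast
    ultimately have "a # M @ [b] = [a,b]" using path_eq by fastforce
    then have "M = []" by simp
    then show ?thesis using that pe_mid by simp
  qed
  obtain P R where xs: "xs = P @ a # R" using h(3) split_list[of a xs] by blast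
  show ?thesis
  proof (cases "b \<in> set R")
    case True
    then obtain M R' where "R = M @ b # R'" using split_list[of b R] by blast
    then show ?thesis using gen xs h(2) by simp
  next
    case False
    then have "b \<in> set P" using xs h(4) ab by auto
    then obtain P1 M where P: "P = P1 @ b # M" using split_list[of b P] by blast
    have "{b,a} \<in> set (path_edges xs)" by (rule gen) (use xs P h(2) in \<open>auto simp: insert_commute\<close>)
    then show ?thesis by (simp add: insert_commute)
  qed
qed

lemma last_edge_unique: "is_path N E xs \<Longrightarrow> e \<in> set (path_edges xs) \<Longrightarrow> e' \<in> set (path_edges xs)
   \<Longrightarrow> last xs \<in> e \<Longrightarrow> last xs \<in> e' \<Longrightarrow> e = e'"
proof -
  assume h: "is_path N E xs" "e \<in> set (path_edges xs)" "e' \<in> set (path_edges xs)"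
    "last xs \<in> e" "last xs \<in> e'"
  have "xs \<noteq> []" using h by (auto simp: is_path_def)
  then obtain ys l where xs: "xs = ys @ [l]" by (metis append_butlast_last_id)
  have "ys \<noteq> []" using h(2) xs by auto
  have dl: "l \<notin> set ys" using path_distinct[OF h(1)] xs by simp
  have pe: "path_edges xs = path_edges ys @ [{last ys, l}]" using xs \<open>ys \<noteq> []\<close> pe_append[of ys "[l]"] by simp
  have "e \<notin> set (path_edges ys)" "e' \<notin> set (path_edges ys)"
    using h(4,5) xs dl pe_subset by auto
  then show ?thesis using h(2,3) pe by auto
qed

lemma incident_unique: "is_path N E xs \<Longrightarrow> incident E e xs \<Longrightarrow> u \<in> set xs \<Longrightarrow> u \<in> e
   \<Longrightarrow> u' \<in> set xs \<Longrightarrow> u' \<in> e \<Longrightarrow> u = u'"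
proof (rule ccontr)
  assume h: "is_path N E xs" "incident E e xs" "u \<in> set xs" "u \<in> e" "u' \<in> set xs" "u' \<in> e" "u \<noteq> u'"
  have "e \<in> E" "e \<notin> set (path_edges xs)" using h(2) by (auto simp: incident_def)
  then obtain c where "c \<noteq> u" "e = {u,c}" using edge_other h(4) by blast
  then have "e = {u,u'}" using h by auto
  then show False using chord[OF h(1), of u u'] h \<open>e \<in> E\<close> \<open>e \<notin> _\<close> by auto
qed

lemma q_path_eq: "is_path N E xs \<Longrightarrow> incident E e xs \<Longrightarrow> u \<in> set xs \<Longrightarrow> u \<in> e
   \<Longrightarrow> q_path q e xs = q e u"
  unfolding q_path_def
  by (rule arg_cong[where f="q e"], rule some_equality) (auto intro: incident_unique)

lemma prepend: "{x,v} \<in> E \<Longrightarrow> y \<in> N \<Longrightarrow> x \<notin> set (gpath N E v y) \<Longrightarrow> gpath N E x y = x # gpath N E v y"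
proof -
  assume h: "{x,v} \<in> E" "y \<in> N" "x \<notin> set (gpath N E v y)"
  have xv: "x \<noteq> v" "x \<in> N" "v \<in> N" using edge2 h(1) by auto
  have g: "is_path N E (gpath N E v y)" "hd (gpath N E v y) = v" "last (gpath N E v y) = y"
    "gpath N E v y \<noteq> []" using gp[OF xv(3) h(2)] gp_ne[OF xv(3) h(2)] by auto
  have "{x,v} \<notin> set (path_edges (gpath N E v y))" using h(3) pe_subset by blast
  then have "is_path N E (x # gpath N E v y)" using g xv h(1) by (simp add: is_path_Cons[OF g(4)])
  moreover have "last (x # gpath N E v y) = y" using g(3,4) by simp
  ultimately show ?thesis using gp_unique[of "x # gpath N E v y" x y] by simp
qed

lemma first_edge: "{x,v} \<in> E \<Longrightarrow> y \<in> N \<Longrightarrow> {x,v} \<in> set (path_edges (gpath N E x y)) \<Longrightarrow>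
   x \<notin> set (gpath N E v y) \<and> gpath N E x y = x # gpath N E v y"
proof -
  assume h: "{x,v} \<in> E" "y \<in> N" "{x,v} \<in> set (path_edges (gpath N E x y))"
  have xv: "x \<noteq> v" "x \<in> N" "v \<in> N" using edge2 h(1) by auto
  define g where "g = gpath N E x y"
  have g: "is_path N E g" "hd g = x" "last g = y" "g \<noteq> []" using gp[OF xv(2) h(2)] gp_ne[OF xv(2) h(2)] g_def by auto
  obtain r where r: "g = x # r" using g by (cases g) auto
  have "r \<noteq> []" using h(3) r g_def by auto
  then obtain b r' where br: "r = b # r'" by (cases r) auto
  have dist: "distinct g" using path_distinct g by simp
  have "{x,v} \<notin> set (path_edges r)" using dist r pe_subset[of "{x,v}" r] by auto
  have "path_edges g = {x,b} # path_edges r" using r br by simp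
  moreover have "{x,v} \<in> set (path_edges g)" using h(3) by (simp add: g_def)
  ultimately have "{x,v} = {x,b}" using \<open>{x,v} \<notin> set (path_edges r)\<close> by auto
  then have "b = v" using xv by (auto simp: doubleton_eq_iff)
  have rp: "is_path N E r" using g(1) r is_path_Cons[OF \<open>r \<noteq> []\<close>] by simp
  have "gpath N E v y = r" using gp_unique[OF rp] br \<open>b = v\<close> g(3) r \<open>r \<noteq> []\<close> by simp
  moreover have "gpath N E x y = x # r" using r g_def by simp
  moreover have "x \<notin> set r" using dist r by simp
  ultimately show ?thesis by simp
qed

end


context tr begin

definition S where "S x v = {y\<in>N. {x,v} \<in> set (path_edges (gpath N E x y))}"
definition Ch where "Ch x v = {e\<in>E. v \<in> e \<and> e \<noteq> {x,v}}"
definition IP where "IP v a = {e. incident E e (gpath N E v a) \<and> v \<notin> e}"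

lemma S_iff: "{x,v} \<in> E \<Longrightarrow> y \<in> S x v \<longleftrightarrow> y \<in> N \<and> x \<notin> set (gpath N E v y)"
proof
  assume h: "{x,v} \<in> E" "y \<in> S x v"
  then show "y \<in> N \<and> x \<notin> set (gpath N E v y)" using first_edge by (auto simp: S_def)
next
  assume h: "{x,v} \<in> E" "y \<in> N \<and> x \<notin> set (gpath N E v y)"
  have v: "v \<in> N" using edge2 h(1) by auto
  have "gpath N E x y = x # gpath N E v y" using prepend h by auto
  moreover have "gpath N E v y \<noteq> []" "hd (gpath N E v y) = v" using gp gp_ne v h by auto
  ultimately show "y \<in> S x v" using h by (auto simp: S_def pe_Cons)
qed

lemma S_gp: "{x,v} \<in> E \<Longrightarrow> y \<in> S x v \<Longrightarrow> gpath N E x y = x # gpath N E v y"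
  using first_edge by (auto simp: S_def)

lemma S_N: "S x v \<subseteq> N" by (auto simp: S_def)
lemma finS: "finite (S x v)" using finN S_N finite_subset by blast

lemma gp_self: "v \<in> N \<Longrightarrow> gpath N E v v = [v]"
  using gp_unique[of "[v]" v v] by (simp add: is_path_single)

lemma v_in_S: "{x,v} \<in> E \<Longrightarrow> v \<in> S x v"
  using S_iff[of x v v] edge2[of x v] gp_self by auto

lemma v_notin_child: "{v,c} \<in> E \<Longrightarrow> v \<notin> S v c"
  using S_iff[of v c v] edge2[of v c] gp[of c v] gp_ne[of c v] last_in_set by metis


lemma child_sub: "{x,v} \<in> E \<Longrightarrow> {v,c} \<in> E \<Longrightarrow> c \<noteq> x \<Longrightarrow> S v c \<subseteq> S x v"
proof
  fix y assume h: "{x,v} \<in> E" "{v,c} \<in> E" "c \<noteq> x" "y \<in> S v c"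
  have y: "y \<in> N" "v \<notin> set (gpath N E c y)" using S_iff h by auto
  have c: "c \<in> N" "v \<noteq> c" "x \<noteq> v" using edge2 h by auto
  have g: "gpath N E v y = v # gpath N E c y" using S_gp h by auto
  have gc: "gpath N E c y \<noteq> []" "hd (gpath N E c y) = c" using gp gp_ne c y by auto
  have gv: "is_path N E (gpath N E v y)" using gp edge2 h(2) y by blast
  have "x \<notin> set (gpath N E v y)"
  proof
    assume xin: "x \<in> set (gpath N E v y)"
    have "{v,x} \<in> E" using h(1) by (simp add: insert_commute)
    then have "{v,x} \<in> set (path_edges (gpath N E v y))"
      using chord[OF gv] xin g by simp
    then have "{v,x} \<in> set ({v,c} # path_edges (gpath N E c y))" using g gc pe_Cons[OF gc(1), of v] by simp
    moreover have "{v,x} \<notin> set (path_edges (gpath N E c y))" using y(2) pe_subset by blast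
    ultimately have "{v,x} = {v,c}" by simp
    then show False using c h(3) by (auto simp: doubleton_eq_iff)
  qed
  then show "y \<in> S x v" using S_iff h y by auto
qed

definition C where "C x v = {c. {v,c} \<in> E \<and> c \<noteq> x}"

lemma C_N: "C x v \<subseteq> N" using edge2 by (auto simp: C_def)
lemma finC: "finite (C x v)" using finN C_N finite_subset by blast

lemma S_decomp: "{x,v} \<in> E \<Longrightarrow> S x v = insert v (\<Union>c\<in>C x v. S v c)"
proof (intro equalityI subsetI)
  fix y assume h: "{x,v} \<in> E" "y \<in> S x v"
  show "y \<in> insert v (\<Union>c\<in>C x v. S v c)"
  proof (cases "y = v")
    case False
    have v: "v \<in> N" using edge2 h(1) by auto
    have y: "y \<in> N" "x \<notin> set (gpath N E v y)" using S_iff h by auto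
    obtain rest where r: "gpath N E v y = v # rest"
      using gp[OF v y(1)] gp_ne[OF v y(1)] by (cases "gpath N E v y") auto
    have "rest \<noteq> []" using r gp[OF v y(1)] False by auto
    have p: "is_path N E (v # rest)" using gp[OF v y(1)] r by simp
    then have p2: "{v, hd rest} \<in> E" "is_path N E rest" using is_path_Cons[OF \<open>rest \<noteq> []\<close>] by auto
    have "last rest = y" using gp[OF v y(1)] r \<open>rest \<noteq> []\<close> by simp
    then have gc: "gpath N E (hd rest) y = rest" using gp_unique p2 by blast
    have "v \<notin> set rest" using path_distinct[OF p] by simp
    moreover have "hd rest \<noteq> x" using y(2) r \<open>rest \<noteq> []\<close> by (metis hd_in_set list.set_intros(2))
    ultimately have "y \<in> S v (hd rest)" "hd rest \<in> C x v"
      using S_iff[of v "hd rest" y] p2 gc y by (auto simp: C_def)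
    then show ?thesis by blast
  qed (use v_in_S h in auto)
next
  fix y assume h: "{x,v} \<in> E" "y \<in> insert v (\<Union>c\<in>C x v. S v c)"
  then show "y \<in> S x v" using v_in_S[OF h(1)] child_sub[OF h(1)] by (auto simp: C_def)
qed

lemma S_disj: "{v,c} \<in> E \<Longrightarrow> {v,c'} \<in> E \<Longrightarrow> y \<in> S v c \<Longrightarrow> y \<in> S v c' \<Longrightarrow> c = c'"
proof -
  assume h: "{v,c} \<in> E" "{v,c'} \<in> E" "y \<in> S v c" "y \<in> S v c'"
  have "gpath N E c y = gpath N E c' y" using S_gp[OF h(1,3)] S_gp[OF h(2,4)] by simp
  moreover have "c \<in> N" "c' \<in> N" "y \<in> N" using edge2 h S_N[of v c] by auto
  ultimately show ?thesis using gp by metis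
qed

end


context tr begin

lemma stp:
  assumes "{x,v} \<in> E" "c \<in> C x v" "a \<in> S v c"
  shows "gpath N E x a = x # gpath N E v a" "gpath N E v a = v # gpath N E c a"
    "gpath N E c a \<noteq> []" "hd (gpath N E c a) = c" "v \<notin> set (gpath N E c a)"
    "x \<notin> set (gpath N E v a)" "is_path N E (gpath N E x a)" "is_path N E (gpath N E v a)"
    "is_path N E (gpath N E c a)" "{v,c} \<in> E" "c \<noteq> x" "a \<in> N" "x \<noteq> v" "v \<noteq> c"
    "path_edges (gpath N E v a) = {v,c} # path_edges (gpath N E c a)"
    "path_edges (gpath N E x a) = {x,v} # path_edges (gpath N E v a)"
proof -
  have vc: "{v,c} \<in> E" "c \<noteq> x" using assms(2) by (auto simp: C_def)
  have aS: "a \<in> S x v" using child_sub[OF assms(1) vc] assms(3) by auto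
  show g1: "gpath N E x a = x # gpath N E v a" using S_gp assms(1) aS by blast
  show g2: "gpath N E v a = v # gpath N E c a" using S_gp vc assms(3) by blast
  show a: "a \<in> N" using assms(3) S_N by blast
  have N: "x \<in> N" "v \<in> N" "c \<in> N" "x \<noteq> v" "v \<noteq> c" using edge2 assms(1) vc by auto
  then show "x \<noteq> v" "v \<noteq> c" by auto
  show "gpath N E c a \<noteq> []" "hd (gpath N E c a) = c" "is_path N E (gpath N E c a)"
    "is_path N E (gpath N E v a)" "is_path N E (gpath N E x a)" using gp gp_ne N a by auto
  show "v \<notin> set (gpath N E c a)" using S_iff vc assms(3) by blast
  show "x \<notin> set (gpath N E v a)" using S_iff assms(1) aS by blast
  show "{v,c} \<in> E" "c \<noteq> x" using vc by auto
  show "path_edges (gpath N E v a) = {v,c} # path_edges (gpath N E c a)"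
    using g2 gp_ne[OF N(3) a] gp[OF N(3) a] pe_Cons by metis
  show "path_edges (gpath N E x a) = {x,v} # path_edges (gpath N E v a)"
    using g1 g2 pe_Cons by (metis list.distinct(1) list.sel(1))
qed

lemma IP_decomp:
  assumes "{x,v} \<in> E" "c \<in> C x v" "a \<in> S v c"
  shows "IP x a = (Ch x v - {{v,c}}) \<union> IP v a"
proof -
  note s = stp[OF assms]
  define gv where "gv = gpath N E v a"
  define gc where "gc = gpath N E c a"
  have gx: "gpath N E x a = x # gv" using s gv_def by simp
  have gvc: "gv = v # gc" using s gv_def gc_def by simp
  have pex: "path_edges (x # gv) = {x,v} # path_edges gv" using s gv_def by simp
  have pev: "path_edges gv = {v,c} # path_edges gc" using s gv_def gc_def by simp
  have pxv: "is_path N E (x # gv)" using s gx by simp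
  have xgv: "x \<notin> set gv" using s gv_def by simp
  have vgc: "v \<notin> set gc" using s gc_def by simp
  show ?thesis
  proof (intro equalityI subsetI)
    fix e assume "e \<in> IP x a"
    then have e: "e \<in> E" "e \<notin> set (path_edges (x # gv))" "\<exists>u\<in>set (x # gv). u \<in> e" "x \<notin> e"
      by (auto simp: IP_def incident_def gx)
    show "e \<in> Ch x v - {{v,c}} \<union> IP v a"
    proof (cases "v \<in> e")
      case True
      then show ?thesis using e pex pev by (auto simp: Ch_def)
    next
      case False
      then show ?thesis using e pex by (auto simp: IP_def incident_def gv_def[symmetric])
    qed
  next
    fix e assume "e \<in> Ch x v - {{v,c}} \<union> IP v a"
    then show "e \<in> IP x a"
    proof
      assume e: "e \<in> Ch x v - {{v,c}}"
      then obtain w where w: "w \<noteq> v" "e = {v,w}" "e \<in> E" using edge_other by (auto simp: Ch_def)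
      have "w \<noteq> x" using e w by (auto simp: Ch_def insert_commute)
      have "e \<notin> set (path_edges gc)" using vgc pe_subset w by blast
      then show ?thesis using e w \<open>w \<noteq> x\<close> pex pev gvc s(13)
        by (auto simp: IP_def incident_def gx Ch_def)
    next
      assume e: "e \<in> IP v a"
      then have e1: "e \<in> E" "e \<notin> set (path_edges gv)" "v \<notin> e" and u: "\<exists>u\<in>set gv. u \<in> e"
        by (auto simp: IP_def incident_def gv_def)
      have "x \<notin> e"
      proof
        assume "x \<in> e"
        obtain u where "u \<in> set gv" "u \<in> e" using u by blast
        then have "u \<noteq> x" using xgv by auto
        then have "e = {x,u}" using \<open>x \<in> e\<close> \<open>u \<in> e\<close> edge_other[OF e1(1) \<open>x \<in> e\<close>] by auto
        then have "e \<in> set (path_edges (x # gv))"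
          using chord[OF pxv, of x u] e1 \<open>u \<in> set gv\<close> by auto
        then show False using pex e1 by auto
      qed
      then show ?thesis using e1 u pex by (auto simp: IP_def incident_def gx)
    qed
  qed
qed

end


context tr begin

lemma finIP: "finite (IP v a)"
  by (rule finite_subset[OF _ finE]) (auto simp: IP_def incident_def)
lemma finCh: "finite (Ch x v)"
  by (rule finite_subset[OF _ finE]) (auto simp: Ch_def)

lemma xprod_decomp:
  assumes "{x,v} \<in> E" "c \<in> C x v" "a \<in> S v c"
  shows "(\<Prod>e\<in>IP x a. q_path q e (gpath N E x a)) =
    (\<Prod>e\<in>Ch x v - {{v,c}}. q e v) * (\<Prod>e\<in>IP v a. q_path q e (gpath N E v a))"
proof -
  note s = stp[OF assms]
  have d: "IP x a = (Ch x v - {{v,c}}) \<union> IP v a" by (rule IP_decomp[OF assms])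
  have disj: "(Ch x v - {{v,c}}) \<inter> IP v a = {}" by (auto simp: Ch_def IP_def)
  have fin: "finite (Ch x v - {{v,c}})" using finCh by auto
  have "(\<Prod>e\<in>IP x a. q_path q e (gpath N E x a)) =
     (\<Prod>e\<in>Ch x v - {{v,c}}. q_path q e (gpath N E x a)) * (\<Prod>e\<in>IP v a. q_path q e (gpath N E x a))"
    unfolding d by (rule prod.union_disjoint[OF fin finIP disj])
  also have "(\<Prod>e\<in>Ch x v - {{v,c}}. q_path q e (gpath N E x a)) = (\<Prod>e\<in>Ch x v - {{v,c}}. q e v)"
  proof (rule prod.cong[OF refl])
    fix e assume e: "e \<in> Ch x v - {{v,c}}"
    then have "incident E e (gpath N E x a)" using d by (auto simp: IP_def)
    moreover have "v \<in> set (gpath N E x a)" "v \<in> e" using s(1,2) e by (auto simp: Ch_def)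
    ultimately show "q_path q e (gpath N E x a) = q e v" using q_path_eq s(7) by blast
  qed
  also have "(\<Prod>e\<in>IP v a. q_path q e (gpath N E x a)) = (\<Prod>e\<in>IP v a. q_path q e (gpath N E v a))"
  proof (rule prod.cong[OF refl])
    fix e assume e: "e \<in> IP v a"
    then have i1: "incident E e (gpath N E x a)" using d by (auto simp: IP_def)
    have i2: "incident E e (gpath N E v a)" using e by (auto simp: IP_def)
    then obtain u where u: "u \<in> set (gpath N E v a)" "u \<in> e" by (auto simp: incident_def)
    then have "u \<in> set (gpath N E x a)" using s(1) by simp
    then show "q_path q e (gpath N E x a) = q_path q e (gpath N E v a)"
      using q_path_eq[OF s(7) i1] q_path_eq[OF s(8) i2 u] u by simp
  qed
  finally show ?thesis .
qed

lemma phi_decomp: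
  assumes "{x,v} \<in> E" "c \<in> C x v" "a \<in> S v c"
  shows "phi_path E q (gpath N E x a) = (\<Prod>e\<in>Ch x v - {{v,c}}. q e v) * phi_path E q (gpath N E v a)"
proof -
  note s = stp[OF assms]
  define gv where "gv = gpath N E v a"
  define gc where "gc = gpath N E c a"
  have gx: "gpath N E x a = x # gv" using s gv_def by simp
  have gvc: "gv = v # gc" using s gv_def gc_def by simp
  have pex: "path_edges (x # gv) = {x,v} # path_edges gv" using s gv_def by simp
  have pev: "path_edges gv = {v,c} # path_edges gc" using s gv_def gc_def by simp
  have xgv: "x \<notin> set gv" using s gv_def by simp
  have vgc: "v \<notin> set gc" using s gc_def by simp
  define Pv where "Pv = {(u, e). u \<in> set (tl gv) \<and> e \<in> E \<and> u \<in> e \<and> e \<notin> set (path_edges gv)}"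
  define Px where "Px = {(u, e). u \<in> set (tl (x # gv)) \<and> e \<in> E \<and> u \<in> e \<and> e \<notin> set (path_edges (x # gv))}"
  have d: "Px = (\<lambda>e. (v,e)) ` (Ch x v - {{v,c}}) \<union> Pv"
  proof (intro equalityI subsetI)
    fix p assume "p \<in> Px"
    then obtain u e where p: "p = (u,e)" "u \<in> set gv" "e \<in> E" "u \<in> e" "e \<notin> set (path_edges (x # gv))"
      by (auto simp: Px_def)
    show "p \<in> (\<lambda>e. (v,e)) ` (Ch x v - {{v,c}}) \<union> Pv"
    proof (cases "u = v")
      case True
      then show ?thesis using p pex pev by (auto simp: Ch_def)
    next
      case False
      then show ?thesis using p pex gvc by (auto simp: Pv_def)
    qed
  next
    fix p assume "p \<in> (\<lambda>e. (v,e)) ` (Ch x v - {{v,c}}) \<union> Pv"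
    then show "p \<in> Px"
    proof
      assume "p \<in> (\<lambda>e. (v,e)) ` (Ch x v - {{v,c}})"
      then obtain e where e: "p = (v,e)" "e \<in> Ch x v" "e \<noteq> {v,c}" by auto
      then obtain w where w: "w \<noteq> v" "e = {v,w}" "e \<in> E" using edge_other by (auto simp: Ch_def)
      have "e \<notin> set (path_edges gc)" using vgc pe_subset w by blast
      then show ?thesis using e w pex pev gvc by (auto simp: Px_def Ch_def)
    next
      assume "p \<in> Pv"
      then obtain u e where p: "p = (u,e)" "u \<in> set gc" "e \<in> E" "u \<in> e" "e \<notin> set (path_edges gv)"
        by (auto simp: Pv_def gvc)
      have "u \<noteq> x" "u \<noteq> v" using p xgv vgc gvc by auto
      then have "e \<noteq> {x,v}" using p by auto
      then show ?thesis using p pex gvc by (auto simp: Px_def)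
    qed
  qed
  have disj: "(\<lambda>e. (v,e)) ` (Ch x v - {{v,c}}) \<inter> Pv = {}" using vgc gvc by (auto simp: Pv_def)
  have finPv: "finite Pv" by (rule finite_subset[of _ "N \<times> E"]) (auto simp: Pv_def finN finE dest: edge)
  have fin: "finite ((\<lambda>e. (v,e)) ` (Ch x v - {{v,c}}))" using finCh by auto
  have "phi_path E q (gpath N E x a) = (\<Prod>(u,e)\<in>Px. q e u)" by (simp add: phi_path_def Px_def gx)
  also have "\<dots> = (\<Prod>(u,e)\<in>(\<lambda>e. (v,e)) ` (Ch x v - {{v,c}}). q e u) * (\<Prod>(u,e)\<in>Pv. q e u)"
    unfolding d by (rule prod.union_disjoint[OF fin finPv disj])
  also have "(\<Prod>(u,e)\<in>(\<lambda>e. (v,e)) ` (Ch x v - {{v,c}}). q e u) = (\<Prod>e\<in>Ch x v - {{v,c}}. q e v)"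
    by (subst prod.reindex) (auto simp: inj_on_def)
  also have "(\<Prod>(u,e)\<in>Pv. q e u) = phi_path E q (gpath N E v a)" by (simp add: phi_path_def Pv_def gv_def)
  finally show ?thesis .
qed

lemma gp_xv: "{x,v} \<in> E \<Longrightarrow> gpath N E x v = [x,v]"
  using gp_unique[OF path2] by simp

lemma phi_xv: "{x,v} \<in> E \<Longrightarrow> phi_path E q (gpath N E x v) = (\<Prod>e\<in>Ch x v. q e v)"
proof -
  assume h: "{x,v} \<in> E"
  have "{(u, e). u \<in> set (tl [x,v]) \<and> e \<in> E \<and> u \<in> e \<and> e \<notin> set (path_edges [x,v])} = (\<lambda>e. (v,e)) ` Ch x v"
    by (auto simp: Ch_def)
  then have "phi_path E q (gpath N E x v) = (\<Prod>(u,e)\<in>(\<lambda>e. (v,e)) ` Ch x v. q e u)"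
    by (simp add: phi_path_def gp_xv[OF h])
  also have "\<dots> = (\<Prod>e\<in>Ch x v. q e v)" by (subst prod.reindex) (auto simp: inj_on_def)
  finally show ?thesis .
qed

lemma IP_xv: "{x,v} \<in> E \<Longrightarrow> IP x v \<subseteq> Ch x v"
  by (auto simp: IP_def incident_def gp_xv Ch_def)

end


lemma alg:
  fixes g :: "'a \<Rightarrow> int"
  assumes "finite C" "card {c\<in>C. g c \<noteq> 1} \<le> 1"
  shows "(\<Sum>c\<in>C. prod g (C - {c})) = 1 + (int (card C) - 1) * prod g C"
proof (cases "{c\<in>C. g c \<noteq> 1} = {}")
  case True
  then have all1: "\<And>c. c \<in> C \<Longrightarrow> g c = 1" by auto
  have p: "prod g D = 1" if "D \<subseteq> C" for D
    by (rule prod.neutral) (use all1 that in blast)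
  have "(\<Sum>c\<in>C. prod g (C - {c})) = (\<Sum>c\<in>C. 1)" by (rule sum.cong) (auto intro: p)
  then show ?thesis using p[of C] by simp
next
  case False
  then obtain c0 where c0: "c0 \<in> C" "g c0 \<noteq> 1" by auto
  have eq: "c = c0" if "c \<in> C" "g c \<noteq> 1" for c
  proof (rule ccontr)
    assume ne: "c \<noteq> c0"
    have "card {c,c0} \<le> card {c\<in>C. g c \<noteq> 1}" by (rule card_mono) (use that c0 assms(1) in auto)
    then show False using assms(2) ne by simp
  qed
  have one: "\<And>c. c \<in> C \<Longrightarrow> c \<noteq> c0 \<Longrightarrow> g c = 1" using eq by blast
  have p1: "prod g D = 1" if "D \<subseteq> C - {c0}" for D
    by (rule prod.neutral) (use one that in blast)
  have pc: "\<And>D. D \<subseteq> C \<Longrightarrow> c0 \<in> D \<Longrightarrow> prod g D = g c0"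
  proof -
    fix D assume D: "D \<subseteq> C" "c0 \<in> D"
    have "finite D" using D assms(1) finite_subset by blast
    then have "prod g D = g c0 * prod g (D - {c0})" by (rule prod.remove[OF _ D(2)])
    then show "prod g D = g c0" using p1[of "D - {c0}"] D by auto
  qed
  have "(\<Sum>c\<in>C. prod g (C - {c})) = prod g (C - {c0}) + (\<Sum>c\<in>C - {c0}. prod g (C - {c}))"
    using sum.remove[OF assms(1) c0(1)] by blast
  also have "prod g (C - {c0}) = 1" using p1 by blast
  also have "(\<Sum>c\<in>C - {c0}. prod g (C - {c})) = (\<Sum>c\<in>C - {c0}. g c0)"
    by (rule sum.cong) (auto intro!: pc c0)
  also have "\<dots> = int (card C - 1) * g c0" using c0 assms(1) by simp
  finally have L: "(\<Sum>c\<in>C. prod g (C - {c})) = 1 + int (card C - 1) * g c0" .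
  have k: "card C \<ge> 1" using card_gt_0_iff[of C] c0 assms(1) by force
  have "prod g C = g c0" using pc[of C] c0 by simp
  then show ?thesis using L k by (simp add: of_nat_diff)
qed

context tr begin

lemma Ch_img: "{x,v} \<in> E \<Longrightarrow> Ch x v = (\<lambda>c. {v,c}) ` C x v"
proof (intro equalityI subsetI)
  fix e assume h: "{x,v} \<in> E" "e \<in> Ch x v"
  then obtain w where "w \<noteq> v" "e = {v,w}" using edge_other by (auto simp: Ch_def)
  then show "e \<in> (\<lambda>c. {v,c}) ` C x v" using h by (auto simp: Ch_def C_def insert_commute)
next
  fix e assume h: "{x,v} \<in> E" "e \<in> (\<lambda>c. {v,c}) ` C x v"
  then show "e \<in> Ch x v" using edge2[OF h(1)] by (auto simp: Ch_def C_def doubleton_eq_iff)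
qed

lemma C_inj: "inj_on (\<lambda>c. {v,c}) (C x v)"
  using edge2 by (auto simp: inj_on_def C_def doubleton_eq_iff)

lemma valency_Ch: "{x,v} \<in> E \<Longrightarrow> valency E v = card (Ch x v) + 1"
proof -
  assume h: "{x,v} \<in> E"
  have "{e\<in>E. v \<in> e} = insert {x,v} (Ch x v)" using h by (auto simp: Ch_def)
  then show ?thesis using finCh by (simp add: valency_def Ch_def)
qed

lemma card_Ch: "{x,v} \<in> E \<Longrightarrow> card (Ch x v) = card (C x v)"
  using Ch_img C_inj card_image by metis

lemma prod_Ch: "{x,v} \<in> E \<Longrightarrow> (\<Prod>e\<in>Ch x v. q e v) = (\<Prod>c\<in>C x v. q {v,c} v)"
  by (simp add: Ch_img prod.reindex[OF C_inj])

lemma prod_Ch_minus: "{x,v} \<in> E \<Longrightarrow> c \<in> C x v \<Longrightarrow>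
   (\<Prod>e\<in>Ch x v - {{v,c}}. q e v) = (\<Prod>c'\<in>C x v - {c}. q {v,c'} v)"
proof -
  assume h: "{x,v} \<in> E" "c \<in> C x v"
  have "Ch x v - {{v,c}} = (\<lambda>c. {v,c}) ` (C x v - {c})"
    using Ch_img[OF h(1)] C_inj[of v x] h(2) by (simp add: inj_on_image_set_diff)
  moreover have "inj_on (\<lambda>c. {v,c}) (C x v - {c})" using C_inj inj_on_diff by blast
  ultimately show ?thesis by (simp add: prod.reindex)
qed

lemma card_Ch_q: "{x,v} \<in> E \<Longrightarrow> card {c \<in> C x v. g c \<noteq> 1} = card {e \<in> Ch x v. g' e \<noteq> 1}"
  if "\<And>c. g' {v,c} = g c" for g g'
proof -
  assume h: "{x,v} \<in> E"
  have "{e \<in> Ch x v. g' e \<noteq> 1} = (\<lambda>c. {v,c}) ` {c \<in> C x v. g c \<noteq> 1}"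
    using Ch_img[OF h] that by auto
  moreover have "inj_on (\<lambda>c. {v,c}) {c \<in> C x v. g c \<noteq> 1}" using C_inj by (rule inj_on_subset) auto
  ultimately show ?thesis by (simp add: card_image)
qed

end


context tr begin

lemma sum_children:
  assumes "{x,v} \<in> E" "v \<notin> X"
  shows "(\<Sum>y\<in>S x v \<inter> X. h y) = (\<Sum>c\<in>C x v. \<Sum>y\<in>S v c \<inter> X. h y)"
proof -
  have "S x v \<inter> X = (\<Union>c\<in>C x v. S v c \<inter> X)" using S_decomp[OF assms(1)] assms(2) by auto
  moreover have "(\<Sum>y\<in>(\<Union>c\<in>C x v. S v c \<inter> X). h y) = (\<Sum>c\<in>C x v. \<Sum>y\<in>S v c \<inter> X. h y)"
  proof (rule sum.UNION_disjoint)
    show "finite (C x v)" by (rule finC)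
    show "\<forall>c\<in>C x v. finite (S v c \<inter> X)" using finS by blast
    show "\<forall>i\<in>C x v. \<forall>j\<in>C x v. i \<noteq> j \<longrightarrow> S v i \<inter> X \<inter> (S v j \<inter> X) = {}"
      using S_disj by (auto simp: C_def)
  qed
  ultimately show ?thesis by simp
qed

end

locale drt = tr "V \<union> A" E for V A :: "'a set" and E :: "'a set set" +
  fixes f :: "'a \<Rightarrow> int" and q :: "'a set \<Rightarrow> 'a \<Rightarrow> int" and v0 :: 'a
  assumes drt: "decorated_rooted_tree V A E f q v0" and f01: "\<forall>\<alpha>\<in>A. f \<alpha> \<in> {0,1}"
begin

lemma VA: "V \<inter> A = {}" and arrow_val: "\<alpha> \<in> A \<Longrightarrow> valency E \<alpha> = 1"
  and v0V: "v0 \<in> V"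
  and root: "v \<in> V - {v0} \<Longrightarrow> card {e\<in>E. v \<in> e \<and> e \<notin> set (path_edges (gpath (V \<union> A) E v0 v)) \<and> q e v \<noteq> 1} \<le> 1"
  using drt by (auto simp: decorated_rooted_tree_def decorated_tree_def is_root_def)

lemma Yset_eq: "Yset V A E f x {x,v} = S x v \<inter> (V \<union> A0 A f)"
  by (auto simp: Yset_def S_def A0_def)

lemma pfun_eq: "pfun V A E f q x {x,v} = (\<Sum>a\<in>S x v \<inter> (A - A0 A f).
   f a * (\<Prod>e\<in>IP x a. q_path q e (gpath (V \<union> A) E x a)))"
proof -
  have "{a \<in> A - A0 A f. {x,v} \<in> set (path_edges (gpath (V \<union> A) E x a))} = S x v \<inter> (A - A0 A f)"
    by (auto simp: S_def)
  then show ?thesis by (simp add: pfun_def xhat_def IP_def)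
qed

lemma main:
  "{x,v} \<in> E \<Longrightarrow> x \<in> set (gpath (V \<union> A) E v0 v) \<Longrightarrow> x \<noteq> v \<Longrightarrow>
   pfun V A E f q x {x,v} =
    1 + (\<Sum>y\<in>Yset V A E f x {x,v}. phi V A E q x y * (int (valency E y) - 2))"
proof (induction "card (S x v)" arbitrary: x v rule: less_induct)
  case less
  note xvE = less.prems(1)
  have xvN: "x \<in> V \<union> A" "v \<in> V \<union> A" "x \<noteq> v" using edge2[OF xvE] by auto
  have v0N: "v0 \<in> V \<union> A" using v0V by auto
  define g where "g = gpath (V \<union> A) E v0 v"
  have g: "is_path (V \<union> A) E g" "hd g = v0" "last g = v" "g \<noteq> []"
    using gp[OF v0N xvN(2)] gp_ne[OF v0N xvN(2)] g_def by auto
  have vg: "v \<in> set g" using g last_in_set by metis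
  have xg: "x \<in> set g" using less.prems(2) g_def by simp
  have vv0: "v \<noteq> v0"
  proof
    assume "v = v0"
    then have "g = [v0]" using gp_self v0N g_def by simp
    then show False using xg xvN(3) \<open>v = v0\<close> by simp
  qed
  have xvpe: "{x,v} \<in> set (path_edges g)" using chord[OF g(1) xvE xg vg] .
  have onpath: "e \<in> set (path_edges g) \<longleftrightarrow> e = {x,v}" if "e \<in> E" "v \<in> e" for e
  proof
    assume "e \<in> set (path_edges g)"
    show "e = {x,v}" by (rule last_edge_unique[OF g(1) \<open>e \<in> set (path_edges g)\<close> xvpe]) (simp_all add: g(3) that)
  qed (use xvpe in simp)
  have Ch_root: "{e\<in>E. v \<in> e \<and> e \<notin> set (path_edges g) \<and> q e v \<noteq> 1} = {e \<in> Ch x v. q e v \<noteq> 1}"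
    using onpath by (auto simp: Ch_def)
  have child: "v \<in> set (gpath (V \<union> A) E v0 c)" "card (S v c) < card (S x v)"
    if c: "c \<in> C x v" for c
  proof -
    have vc: "{v,c} \<in> E" "c \<noteq> x" using c by (auto simp: C_def)
    have cN: "c \<in> V \<union> A" "v \<noteq> c" using edge2[OF vc(1)] by auto
    have "c \<notin> set g"
    proof
      assume "c \<in> set g"
      then have "{v,c} \<in> set (path_edges g)" using chord[OF g(1) vc(1) vg] by simp
      then have "{v,c} = {x,v}" using onpath vc(1) by simp
      then show False using vc(2) cN(2) by (auto simp: doubleton_eq_iff)
    qed
    then have "is_path (V \<union> A) E (g @ [c])" using is_path_snoc[OF g(1)] g(3) vc(1) cN(1) by simp
    then have "gpath (V \<union> A) E v0 c = g @ [c]" using gp_unique g by simp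
    then show "v \<in> set (gpath (V \<union> A) E v0 c)" using vg by simp
    have "S v c \<subseteq> S x v" using child_sub[OF xvE vc] .
    moreover have "v \<in> S x v" "v \<notin> S v c" using v_in_S[OF xvE] v_notin_child[OF vc(1)] by auto
    ultimately have "S v c \<subset> S x v" by blast
    then show "card (S v c) < card (S x v)" using finS psubset_card_mono by blast
  qed
  have IH: "pfun V A E f q v {v,c} =
    1 + (\<Sum>y\<in>Yset V A E f v {v,c}. phi V A E q v y * (int (valency E y) - 2))"
    if c: "c \<in> C x v" for c
    using less.hyps[OF child(2)[OF c] _ child(1)[OF c]] c edge2 by (auto simp: C_def)
  have vN: "v \<in> V \<union> A" using xvN by simp
  show ?case
  proof (cases "v \<in> A")
    case True
    have "v \<notin> V" using VA True by auto
    have "card (Ch x v) = 0" using valency_Ch[OF xvE] arrow_val[OF True] by simp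
    then have Ch0: "Ch x v = {}" using finCh by simp
    then have C0: "C x v = {}" using Ch_img[OF xvE] Ch0 by simp
    have Sv: "S x v = {v}" using S_decomp[OF xvE] C0 by simp
    have IP0: "IP x v = {}" using IP_xv[OF xvE] Ch0 by simp
    have phixv: "phi V A E q x v = 1" using phi_xv[OF xvE] Ch0 by (simp add: phi_def)
    show ?thesis
    proof (cases "f v = 0")
      case True
      then have "S x v \<inter> (A - A0 A f) = {}" "S x v \<inter> (V \<union> A0 A f) = {v}"
        using Sv \<open>v \<in> A\<close> by (auto simp: A0_def)
      then show ?thesis using pfun_eq[of x v] Yset_eq[of x v] phixv arrow_val[OF \<open>v \<in> A\<close>] by simp
    next
      case False
      then have f1: "f v = 1" using f01 \<open>v \<in> A\<close> by auto
      then have "S x v \<inter> (A - A0 A f) = {v}" "S x v \<inter> (V \<union> A0 A f) = {}"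
        using Sv \<open>v \<in> A\<close> \<open>v \<notin> V\<close> by (auto simp: A0_def)
      then show ?thesis using pfun_eq[of x v] Yset_eq[of x v] IP0 f1 by simp
    qed
  next
    case False
    then have vV: "v \<in> V" using vN by simp
    define gg where "gg c = q {v,c} v" for c
    define Q where "Q c = prod gg (C x v - {c})" for c
    define P where "P = prod gg (C x v)"
    define k where "k = card (C x v)"
    define w where "w y = int (valency E y) - 2" for y
    define p where "p c = pfun V A E f q v {v,c}" for c
    have "card {e \<in> Ch x v. q e v \<noteq> 1} \<le> 1" using root[of v] vV vv0 Ch_root g_def by simp
    then have "card {c \<in> C x v. gg c \<noteq> 1} \<le> 1" using card_Ch_q[where g=gg and g'="\<lambda>e. q e v", OF _ xvE] by (simp add: gg_def)
    then have algQ: "(\<Sum>c\<in>C x v. Q c) = 1 + (int k - 1) * P"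
      using alg[OF finC] by (simp add: Q_def P_def k_def)
    have Qc: "(\<Prod>e\<in>Ch x v - {{v,c}}. q e v) = Q c" if "c \<in> C x v" for c
      using prod_Ch_minus[OF xvE that] by (simp add: Q_def gg_def)
    have "pfun V A E f q x {x,v} = (\<Sum>c\<in>C x v. \<Sum>a\<in>S v c \<inter> (A - A0 A f).
        f a * (\<Prod>e\<in>IP x a. q_path q e (gpath (V \<union> A) E x a)))"
      using pfun_eq[of x v] sum_children[OF xvE, of "A - A0 A f"] False by simp
    also have "\<dots> = (\<Sum>c\<in>C x v. Q c * p c)"
    proof (rule sum.cong[OF refl])
      fix c assume c: "c \<in> C x v"
      have "(\<Sum>a\<in>S v c \<inter> (A - A0 A f). f a * (\<Prod>e\<in>IP x a. q_path q e (gpath (V \<union> A) E x a)))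
        = (\<Sum>a\<in>S v c \<inter> (A - A0 A f). Q c * (f a * (\<Prod>e\<in>IP v a. q_path q e (gpath (V \<union> A) E v a))))"
        by (rule sum.cong[OF refl]) (simp add: xprod_decomp[OF xvE c] Qc[OF c])
      also have "\<dots> = Q c * p c" by (simp add: p_def pfun_eq sum_distrib_left)
      finally show "(\<Sum>a\<in>S v c \<inter> (A - A0 A f). f a * (\<Prod>e\<in>IP x a. q_path q e (gpath (V \<union> A) E x a)))
        = Q c * p c" .
    qed
    finally have L: "pfun V A E f q x {x,v} = (\<Sum>c\<in>C x v. Q c * p c)" .
    define Y where "Y = V \<union> A0 A f"
    have YS: "S x v \<inter> Y = insert v (S x v \<inter> (Y - {v}))" using v_in_S[OF xvE] vV by (auto simp: Y_def)
    have "(\<Sum>y\<in>S x v \<inter> Y. phi V A E q x y * w y) =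
       phi V A E q x v * w v + (\<Sum>y\<in>S x v \<inter> (Y - {v}). phi V A E q x y * w y)"
      unfolding YS by (rule sum.insert) (use finS in auto)
    also have "phi V A E q x v * w v = P * (int k + 1 - 2)"
      using phi_xv[OF xvE, where q=q] prod_Ch[OF xvE, where q=q] valency_Ch[OF xvE] card_Ch[OF xvE]
      by (simp add: phi_def P_def gg_def w_def k_def)
    also have "(\<Sum>y\<in>S x v \<inter> (Y - {v}). phi V A E q x y * w y) =
        (\<Sum>c\<in>C x v. \<Sum>y\<in>S v c \<inter> (Y - {v}). phi V A E q x y * w y)"
      by (rule sum_children[OF xvE]) simp
    also have "\<dots> = (\<Sum>c\<in>C x v. Q c * (p c - 1))"
    proof (rule sum.cong[OF refl])
      fix c assume c: "c \<in> C x v"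
      have vc: "{v,c} \<in> E" using c by (simp add: C_def)
      have "S v c \<inter> (Y - {v}) = S v c \<inter> Y" using v_notin_child[OF vc] by auto
      then have "(\<Sum>y\<in>S v c \<inter> (Y - {v}). phi V A E q x y * w y) = (\<Sum>y\<in>S v c \<inter> Y. phi V A E q x y * w y)"
        by simp
      also have "\<dots> = (\<Sum>y\<in>S v c \<inter> Y. Q c * (phi V A E q v y * w y))"
      proof (rule sum.cong[OF refl])
        fix y assume "y \<in> S v c \<inter> Y"
        then have y: "y \<in> S v c" by simp
        show "phi V A E q x y * w y = Q c * (phi V A E q v y * w y)"
          unfolding phi_def using phi_decomp[OF xvE c y, where q=q] Qc[OF c] by simp
      qed
      also have "\<dots> = Q c * (p c - 1)"
        using IH[OF c] by (simp add: sum_distrib_left[symmetric] p_def Yset_eq Y_def w_def)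
      finally show "(\<Sum>y\<in>S v c \<inter> (Y - {v}). phi V A E q x y * w y) = Q c * (p c - 1)" .
    qed
    finally have R: "(\<Sum>y\<in>Yset V A E f x {x,v}. phi V A E q x y * w y) =
        P * (int k + 1 - 2) + (\<Sum>c\<in>C x v. Q c * (p c - 1))" by (simp add: Yset_eq Y_def)
    have "(\<Sum>c\<in>C x v. Q c * (p c - 1)) = (\<Sum>c\<in>C x v. Q c * p c) - (\<Sum>c\<in>C x v. Q c)"
      by (simp add: right_diff_distrib sum_subtractf)
    then show ?thesis using L R algQ unfolding w_def by (simp add: algebra_simps)
  qed
qed

end

theorem lemma6p3:
  fixes V A :: "'a set" and E :: "'a set set" and f :: "'a \<Rightarrow> int"
    and q :: "'a set \<Rightarrow> 'a \<Rightarrow> int" and v0 :: 'a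
  assumes "decorated_rooted_tree V A E f q v0"
    and "\<forall>\<alpha>\<in>A. f \<alpha> \<in> {0, 1}"
    and "out_pair V A E v0 x e"
  shows "pfun V A E f q x e =
    1 + (\<Sum>y\<in>Yset V A E f x e. phi V A E q x y * (int (valency E y) - 2))"
proof -
  have "is_tree (V \<union> A) E" using assms(1) by (simp add: decorated_rooted_tree_def decorated_tree_def)
  then interpret drt V A E f q v0
    using assms(1,2) by (simp add: drt_def drt_axioms_def tr_def)
  obtain v where v: "e = {x,v}" "e \<in> E" "x \<noteq> v" "x \<in> set (gpath (V \<union> A) E v0 v)"
    using assms(3) by (auto simp: out_pair_def tree_less_def)
  show ?thesis using main[of x v] v by simp
qed

end
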